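(* Let $n\geq1$, $\sigma\in PGL_{2n+2}(\mathbb{C})$ and let $\tilde\sigma\in GL_{2n+2}(\mathbb{C})$ be a representative of $\sigma$. If $\operatorname{rank}(\tilde\sigma-\alpha I)\geq n+1$ for every $\alpha\in\mathbb{C}$, then there is an $n$-dimensional projective linear subspace $\ell\subset\mathbb{P}^{2n+1}$ such that $\sigma(\ell)\cap\ell=\emptyset$. *)

theory Defs
  imports "HOL-Analysis.Analysis"
begin

end

theory Submission
  imports Defs "HOL-Computational_Algebra.Fundamental_Theorem_Algebra"
begin


lemma rank_nullity_sub:
  fixes h :: "'a::field^'n \<Rightarrow> 'a^'n"
  assumes lin: "Vector_Spaces.linear (*s) (*s) h" and Q: "vec.subspace Q"
  shows "vec.dim Q = vec.dim (h ` Q) + vec.dim {x\<in>Q. h x = 0}"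
proof -
  define K where "K = {x\<in>Q. h x = 0}"
  have K: "vec.subspace K" unfolding K_def
    using Q vec.linear_0[OF lin] vec.linear_add[OF lin] vec.linear_scale[OF lin]
    by (auto simp: vec.subspace_def)
  obtain BK where BK: "BK \<subseteq> K" "vec.independent BK" "K \<subseteq> vec.span BK" "card BK = vec.dim K"
    using vec.basis_exists by blast
  have "BK \<subseteq> Q" using BK(1) K_def by auto
  then obtain B where B: "BK \<subseteq> B" "B \<subseteq> Q" "vec.independent B" "Q \<subseteq> vec.span B"
    using vec.maximal_independent_subset_extend[OF _ BK(2)] by metis
  have finB: "finite B" using B(3) vec.independent_bound_general by blast
  define C where "C = B - BK"
  have indC: "vec.independent C" using B(3) C_def vec.independent_mono by blast
  have spB: "vec.span B = Q" using B Q vec.span_subspace by blast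
  have dimQ: "vec.dim Q = card B" using B vec.dim_unique by blast
  have cardB: "card B = card BK + card C"
    using finB B(1) C_def by (metis card_Diff_subset card_mono le_add_diff_inverse finite_subset)
  have BC: "B = BK \<union> C" using B(1) C_def by auto
  have sums: "{x + y |x y. x \<in> vec.span BK \<and> y \<in> vec.span C} = Q"
    using vec.span_Un[of BK C] BC spB by simp
  have "vec.dim {x + y |x y. x \<in> vec.span BK \<and> y \<in> vec.span C} + vec.dim (vec.span BK \<inter> vec.span C)
        = vec.dim (vec.span BK) + vec.dim (vec.span C)"
    by (rule vec.dim_sums_Int) auto
  then have "vec.dim (vec.span BK \<inter> vec.span C) = 0"
    using sums dimQ cardB vec.dim_eq_card_independent[OF BK(2)] vec.dim_eq_card_independent[OF indC]
    by simp
  then have int0: "vec.span BK \<inter> vec.span C \<subseteq> {0}" by simp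
  have spCQ: "vec.span C \<subseteq> Q" using spB C_def vec.span_mono by blast
  have inj: "inj_on h (vec.span C)"
  proof (rule inj_onI)
    fix x y assume x: "x \<in> vec.span C" and y: "y \<in> vec.span C" and e: "h x = h y"
    have "x - y \<in> vec.span C" using x y vec.span_diff by blast
    moreover have "h (x - y) = 0" using e vec.linear_diff[OF lin] by simp
    ultimately have "x - y \<in> K" using spCQ K_def by auto
    then have "x - y \<in> vec.span BK" using BK(3) by auto
    with \<open>x - y \<in> vec.span C\<close> int0 show "x = y" by auto
  qed
  have indhC: "vec.independent (h ` C)"
    using vec.linear_independent_injective_image[OF lin indC inj] .
  have cardhC: "card (h ` C) = card C"
    using inj vec.span_superset by (metis card_image inj_on_subset)
  have "vec.dim (h ` Q) = card (h ` C)"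
  proof (rule vec.dim_unique[OF _ _ indhC refl])
    show "h ` C \<subseteq> h ` Q" using C_def B(2) by auto
    have "h ` B \<subseteq> vec.span (h ` C)"
    proof
      fix y assume "y \<in> h ` B"
      then obtain b where b: "b \<in> B" "y = h b" by auto
      show "y \<in> vec.span (h ` C)"
      proof (cases "b \<in> BK")
        case True then have "h b = 0" using BK(1) K_def by auto
        then show ?thesis using b vec.span_zero by simp
      next
        case False then have "b \<in> C" using b C_def by auto
        then show ?thesis using b vec.span_base by blast
      qed
    qed
    then have "vec.span (h ` B) \<subseteq> vec.span (h ` C)"
      using vec.span_minimal vec.subspace_span by blast
    then show "h ` Q \<subseteq> vec.span (h ` C)"
      using vec.linear_span_image[OF lin, of B] spB by simp
  qed
  then show ?thesis using dimQ cardB cardhC BK(4) K_def by simp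
qed

lemma rel_rank_nullity:
  fixes h :: "'a::field^'n \<Rightarrow> 'a^'n"
  assumes lin: "Vector_Spaces.linear (*s) (*s) h" and Q: "vec.subspace Q" and S: "vec.subspace S"
  shows "vec.dim {x\<in>Q. h x \<in> S} + vec.dim {a + b |a b. a \<in> h ` Q \<and> b \<in> S} = vec.dim Q + vec.dim S"
proof -
  define E where "E = {x\<in>Q. h x \<in> S}"
  have E: "vec.subspace E" unfolding E_def
    using Q S vec.linear_0[OF lin] vec.linear_add[OF lin] vec.linear_scale[OF lin]
    by (auto simp: vec.subspace_def)
  have hQ: "vec.subspace (h ` Q)" using vec.linear_subspace_image[OF lin Q] .
  have k: "{x\<in>E. h x = 0} = {x\<in>Q. h x = 0}" using S vec.subspace_0 E_def by auto
  have im: "h ` E = h ` Q \<inter> S" unfolding E_def by auto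
  have 1: "vec.dim E = vec.dim (h ` E) + vec.dim {x\<in>E. h x = 0}" by (rule rank_nullity_sub[OF lin E])
  have 2: "vec.dim Q = vec.dim (h ` Q) + vec.dim {x\<in>Q. h x = 0}" by (rule rank_nullity_sub[OF lin Q])
  have 3: "vec.dim {a + b |a b. a \<in> h ` Q \<and> b \<in> S} + vec.dim (h ` Q \<inter> S) = vec.dim (h ` Q) + vec.dim S"
    by (rule vec.dim_sums_Int[OF hQ S])
  show ?thesis using 1 2 3 k im E_def by simp
qed

lemma rows_le_columns:
  fixes M :: "'a::field^'n^'m"
  shows "vec.dim (rows M) \<le> vec.dim (columns M)"
proof -
  obtain Bc where Bc: "Bc \<subseteq> columns M" "vec.independent Bc" "columns M \<subseteq> vec.span Bc" "card Bc = vec.dim (columns M)"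
    using vec.basis_exists by blast
  have finBc: "finite Bc" using Bc(2) vec.independent_bound_general by blast
  have "\<forall>j. \<exists>u. column j M = (\<Sum>b\<in>Bc. u b *s b)"
  proof
    fix j
    have "column j M \<in> vec.span Bc" using Bc(3) by (auto simp: columns_def)
    then show "\<exists>u. column j M = (\<Sum>b\<in>Bc. u b *s b)"
      using vec.span_finite[OF finBc] by auto
  qed
  then obtain u where u: "\<And>j. column j M = (\<Sum>b\<in>Bc. u j b *s b)" by metis
  define r where "r b = (\<chi> j. u j b)" for b
  have rowi: "row i M = (\<Sum>b\<in>Bc. (b $ i) *s r b)" for i
  proof (rule vec_eq_iff[THEN iffD2], rule allI)
    fix j
    have "M $ i $ j = (column j M) $ i" by (simp add: column_def)
    also have "\<dots> = (\<Sum>b\<in>Bc. u j b * b $ i)" by (simp add: u sum_component)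
    finally show "row i M $ j = (\<Sum>b\<in>Bc. (b $ i) *s r b) $ j"
      by (simp add: row_def sum_component r_def mult.commute)
  qed
  have "rows M \<subseteq> vec.span (r ` Bc)"
  proof
    fix x assume "x \<in> rows M"
    then obtain i where "x = row i M" by (auto simp: rows_def)
    then show "x \<in> vec.span (r ` Bc)"
      by (simp add: rowi vec.span_sum vec.span_scale vec.span_base)
  qed
  then have "vec.dim (rows M) \<le> card (r ` Bc)" using vec.dim_le_card finBc by blast
  also have "\<dots> \<le> card Bc" using card_image_le finBc by blast
  finally show ?thesis using Bc(4) by simp
qed

lemma columns_range:
  fixes M :: "'a::field^'n^'m"
  shows "columns M \<subseteq> range (\<lambda>x. M *v x)"
proof
  fix c assume "c \<in> columns M"
  then obtain j where c: "c = column j M" by (auto simp: columns_def)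
  have "M *v axis j 1 = column j M"
    by (simp add: vec_eq_iff matrix_vector_mult_def axis_def column_def if_distrib cong: if_cong)
  then show "c \<in> range (\<lambda>x. M *v x)" using c by (metis rangeI)
qed

lemma kernel_rank:
  fixes M :: "'a::field^'n^'n"
  shows "vec.dim {x. M *v x = 0} + rank M \<le> CARD('n)"
proof -
  have lin: "Vector_Spaces.linear (*s) (*s) ((*v) M)" by (rule matrix_vector_mul_linear_gen)
  have "vec.dim (UNIV :: ('a^'n) set) = vec.dim (range ((*v) M)) + vec.dim {x\<in>UNIV. M *v x = 0}"
    by (rule rank_nullity_sub[OF lin]) simp
  moreover have "rank M \<le> vec.dim (range ((*v) M))"
    unfolding row_rank_def_gen
    using rows_le_columns[of M] vec.dim_subset[OF columns_range[of M]] by simp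
  moreover have "vec.dim (UNIV :: ('a^'n) set) = CARD('n)" by (rule vec_dim_card)
  ultimately show ?thesis by simp
qed

definition pe :: "('a::field^'n \<Rightarrow> 'a^'n) \<Rightarrow> 'a poly \<Rightarrow> 'a^'n \<Rightarrow> 'a^'n" where
  "pe f p x = (\<Sum>i\<le>degree p. coeff p i *s (f ^^ i) x)"

lemma pe_le:
  assumes "degree p \<le> n"
  shows "pe f p x = (\<Sum>i\<le>n. coeff p i *s (f ^^ i) x)"
  unfolding pe_def
  by (rule sum.mono_neutral_left) (use assms in \<open>auto simp: coeff_eq_0\<close>)

lemma pe_add: "pe f (p + q) x = pe f p x + pe f q x"
proof -
  define n where "n = max (degree p) (degree q)"
  have "degree (p + q) \<le> n" using degree_add_le n_def by (metis max.cobounded1 max.cobounded2)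
  then have "pe f (p + q) x = (\<Sum>i\<le>n. coeff (p + q) i *s (f ^^ i) x)" by (rule pe_le)
  also have "\<dots> = (\<Sum>i\<le>n. coeff p i *s (f ^^ i) x) + (\<Sum>i\<le>n. coeff q i *s (f ^^ i) x)"
    by (simp add: vector_sadd_rdistrib sum.distrib)
  also have "\<dots> = pe f p x + pe f q x"
  proof -
    have a: "pe f p x = (\<Sum>i\<le>n. coeff p i *s (f ^^ i) x)" by (rule pe_le) (simp add: n_def)
    have b: "pe f q x = (\<Sum>i\<le>n. coeff q i *s (f ^^ i) x)" by (rule pe_le) (simp add: n_def)
    show ?thesis by (simp only: a b)
  qed
  finally show ?thesis .
qed

lemma pe_smult: "pe f (smult c p) x = c *s pe f p x"
proof -
  have "pe f (smult c p) x = (\<Sum>i\<le>degree p. coeff (smult c p) i *s (f ^^ i) x)"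
    by (rule pe_le) (rule degree_smult_le)
  also have "\<dots> = c *s pe f p x"
    by (simp add: pe_def vec.scale_sum_right vector_smult_assoc)
  finally show ?thesis .
qed

lemma pe_diff: "pe f (p - q) x = pe f p x - pe f q x"
proof -
  have "pe f p x = pe f ((p - q) + q) x" by simp
  then show ?thesis by (simp only: pe_add) simp
qed

lemma pe_0[simp]: "pe f 0 x = 0"
  by (simp add: pe_def)

lemma pe_monom: "pe f (monom 1 j) x = (f ^^ j) x"
proof -
  have "pe f (monom 1 j) x = (\<Sum>i\<le>j. coeff (monom 1 j) i *s (f ^^ i) x)"
    by (rule pe_le) (simp add: degree_monom_le)
  also have "\<dots> = (\<Sum>i\<le>j. if i = j then (f ^^ i) x else 0)"
    by (rule sum.cong) (auto simp: coeff_monom)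
  also have "\<dots> = (f ^^ j) x" by simp
  finally show ?thesis .
qed

lemma pe_pCons0:
  assumes lin: "Vector_Spaces.linear (*s) (*s) f"
  shows "pe f (pCons 0 q) x = f (pe f q x)"
proof -
  have "pe f (pCons 0 q) x = (\<Sum>i\<le>Suc (degree q). coeff (pCons 0 q) i *s (f ^^ i) x)"
    by (rule pe_le) (simp add: degree_pCons_le)
  also have "\<dots> = (\<Sum>i\<le>degree q. coeff q i *s (f ^^ Suc i) x)"
    by (subst sum.atMost_Suc_shift) simp
  also have "\<dots> = f (pe f q x)"
    by (simp add: pe_def vec.linear_sum[OF lin] vec.linear_scale[OF lin])
  finally show ?thesis .
qed

lemma pe_lin:
  assumes lin: "Vector_Spaces.linear (*s) (*s) f"
  shows "pe f ([:-z, 1:] * q) x = f (pe f q x) - z *s pe f q x"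
proof -
  have "[:-z, 1:] * q = smult (-z) q + pCons 0 q" by simp
  then have "pe f ([:-z, 1:] * q) x = pe f (smult (-z) q) x + pe f (pCons 0 q) x"
    by (simp only: pe_add)
  also have "\<dots> = (-z) *s pe f q x + f (pe f q x)"
    by (simp only: pe_smult pe_pCons0[OF lin])
  finally show ?thesis by (simp add: vec.scale_minus_left)
qed

lemma pe_in:
  assumes Q: "vec.subspace Q" and fQ: "f ` Q \<subseteq> Q" and x: "x \<in> Q"
  shows "pe f p x \<in> Q"
proof -
  have "(f ^^ i) x \<in> Q" for i
    by (induction i) (use x fQ in auto)
  then show ?thesis unfolding pe_def
    by (intro vec.subspace_sum[OF Q] vec.subspace_scale[OF Q]) auto
qed

lemma eig_from_poly:
  fixes f :: "complex^'n \<Rightarrow> complex^'n"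
  assumes lin: "Vector_Spaces.linear (*s) (*s) f" and Q: "vec.subspace Q" and fQ: "f ` Q \<subseteq> Q"
    and S: "vec.subspace S"
  shows "p \<noteq> 0 \<Longrightarrow> w0 \<in> Q \<Longrightarrow> w0 \<notin> S \<Longrightarrow> pe f p w0 \<in> S \<Longrightarrow>
         \<exists>w \<nu>. w \<in> Q \<and> w \<notin> S \<and> f w - \<nu> *s w \<in> S"
proof (induction "degree p" arbitrary: p rule: less_induct)
  case less
  show ?case
  proof (cases "degree p = 0")
    case True
    then obtain c where p: "p = [:c:]" by (metis degree_eq_zeroE)
    with less.prems have c: "c \<noteq> 0" by simp
    have "pe f p w0 = c *s w0" by (simp add: pe_def p)
    then have "c *s w0 \<in> S" using less.prems by simp
    then have "(1/c) *s (c *s w0) \<in> S" using vec.subspace_scale[OF S] by blast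
    then have "w0 \<in> S" using c by (simp add: vector_smult_assoc)
    then show ?thesis using less.prems by simp
  next
    case False
    then obtain z where "poly p z = 0" by (metis fundamental_theorem_of_algebra constant_degree)
    then obtain q where pq: "p = [:-z,1:] * q" using poly_eq_0_iff_dvd by (metis dvdE)
    have q0: "q \<noteq> 0" using pq less.prems by auto
    have "degree p = degree [:-z,1:] + degree q" unfolding pq by (rule degree_mult_eq) (use q0 in auto)
    then have dq: "degree q < degree p" by simp
    have e: "pe f p w0 = f (pe f q w0) - z *s pe f q w0" unfolding pq by (rule pe_lin[OF lin])
    show ?thesis
    proof (cases "pe f q w0 \<in> S")
      case True then show ?thesis using less.hyps[OF dq q0] less.prems by blast
    next
      case False
      have "pe f q w0 \<in> Q" by (rule pe_in[OF Q fQ less.prems(2)])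
      moreover have "f (pe f q w0) - z *s pe f q w0 \<in> S" using e less.prems(4) by simp
      ultimately show ?thesis using False by blast
    qed
  qed
qed

lemma eig_exists:
  fixes f :: "complex^'n \<Rightarrow> complex^'n"
  assumes lin: "Vector_Spaces.linear (*s) (*s) f" and Q: "vec.subspace Q" and fQ: "f ` Q \<subseteq> Q"
    and S: "vec.subspace S" and w0: "w0 \<in> Q" "w0 \<notin> S"
  shows "\<exists>w \<nu>. w \<in> Q \<and> w \<notin> S \<and> f w - \<nu> *s w \<in> S"
proof -
  define X where "X j = S \<union> (\<lambda>i. (f ^^ i) w0) ` {..<j}" for j
  have "\<exists>j \<le> CARD('n). (f ^^ j) w0 \<in> vec.span (X j)"
  proof (rule ccontr)
    assume "\<not> ?thesis"
    then have nin: "\<forall>j\<le>CARD('n). (f^^j) w0 \<notin> vec.span (X j)" by auto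
    have "j \<le> Suc CARD('n) \<Longrightarrow> vec.dim (X j) \<ge> j" for j
    proof (induction j)
      case 0 show ?case by simp
    next
      case (Suc j)
      have "X (Suc j) = insert ((f^^j) w0) (X j)" by (auto simp: X_def lessThan_Suc)
      moreover have "(f^^j) w0 \<notin> vec.span (X j)" using nin Suc.prems by simp
      ultimately have "vec.dim (X (Suc j)) = vec.dim (X j) + 1" by (simp add: vec.dim_insert)
      then show ?case using Suc by simp
    qed
    then have "vec.dim (X (Suc CARD('n))) \<ge> Suc CARD('n)" by simp
    moreover have "vec.dim (X (Suc CARD('n))) \<le> CARD('n)" by (rule dim_subset_UNIV_cart_gen)
    ultimately show False by simp
  qed
  then obtain j where j: "(f^^j) w0 \<in> vec.span (X j)" by blast
  define T where "T = {s + pe f q w0 | s q. s \<in> S \<and> (\<forall>i\<ge>j. coeff q i = 0)}"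
  have T: "vec.subspace T"
    unfolding vec.subspace_def
  proof (intro conjI ballI allI)
    show "0 \<in> T" unfolding T_def using vec.subspace_0[OF S]
      by (intro CollectI exI[of _ 0] exI[of _ "0::complex poly"]) auto
  next
    fix x y assume "x \<in> T" "y \<in> T"
    then obtain s1 q1 s2 q2 where "x = s1 + pe f q1 w0" "s1 \<in> S" "\<forall>i\<ge>j. coeff q1 i = 0"
      "y = s2 + pe f q2 w0" "s2 \<in> S" "\<forall>i\<ge>j. coeff q2 i = 0" unfolding T_def by blast
    then show "x + y \<in> T" unfolding T_def
      by (intro CollectI exI[of _ "s1 + s2"] exI[of _ "q1 + q2"])
         (auto simp: pe_add vec.subspace_add[OF S])
  next
    fix c x assume "x \<in> T"
    then obtain s1 q1 where "x = s1 + pe f q1 w0" "s1 \<in> S" "\<forall>i\<ge>j. coeff q1 i = 0"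
      unfolding T_def by blast
    then show "c *s x \<in> T" unfolding T_def
      by (intro CollectI exI[of _ "c *s s1"] exI[of _ "smult c q1"])
         (auto simp: pe_smult vec.subspace_scale[OF S] vector_add_ldistrib)
  qed
  have "X j \<subseteq> T"
  proof
    fix x assume "x \<in> X j"
    then consider "x \<in> S" | i where "i < j" "x = (f ^^ i) w0" unfolding X_def by auto
    then show "x \<in> T"
    proof cases
      case 1 then show ?thesis unfolding T_def
        by (intro CollectI exI[of _ x] exI[of _ 0]) auto
    next
      case 2 then show ?thesis unfolding T_def using vec.subspace_0[OF S]
        by (intro CollectI exI[of _ 0] exI[of _ "monom 1 i"]) (auto simp: pe_monom coeff_monom)
    qed
  qed
  then have "vec.span (X j) \<subseteq> T" using vec.span_minimal T by blast
  with j obtain s q where sq: "s \<in> S" "\<forall>i\<ge>j. coeff q i = 0" "(f^^j) w0 = s + pe f q w0"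
    unfolding T_def by blast
  define p where "p = monom 1 j - q"
  have "coeff p j = 1" using sq(2) by (simp add: p_def)
  then have p0: "p \<noteq> 0" by auto
  have "pe f p w0 = s" using sq(3) by (simp add: p_def pe_diff pe_monom)
  then show ?thesis using eig_from_poly[OF lin Q fQ S p0 w0] sq(1) by simp
qed





definition Eig :: "('a::field^'n \<Rightarrow> 'a^'n) \<Rightarrow> ('a^'n) set \<Rightarrow> ('a^'n) set \<Rightarrow> 'a \<Rightarrow> ('a^'n) set" where
  "Eig f Q S \<nu> = {x\<in>Q. f x - \<nu> *s x \<in> S}"

definition Rg :: "('a::field^'n \<Rightarrow> 'a^'n) \<Rightarrow> ('a^'n) set \<Rightarrow> ('a^'n) set \<Rightarrow> 'a \<Rightarrow> ('a^'n) set" where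
  "Rg f Q S \<nu> = {a + b |a b. a \<in> (\<lambda>x. f x - \<nu> *s x) ` Q \<and> b \<in> S}"

definition good :: "('a::field^'n \<Rightarrow> 'a^'n) \<Rightarrow> ('a^'n) set \<Rightarrow> 'a^'n \<Rightarrow> bool" where
  "good f S w \<longleftrightarrow> w \<notin> vec.span S \<and> f w \<notin> vec.span (insert w S) \<and>
      f (f w) \<in> vec.span (insert w (insert (f w) S))"

lemma lin_shift:
  assumes lin: "Vector_Spaces.linear (*s) (*s) (f :: 'a::field^'n \<Rightarrow> 'a^'n)"
  shows "Vector_Spaces.linear (*s) (*s) (\<lambda>x. f x - \<nu> *s x)"
  by (rule vec.linear_compose_sub[OF lin vec.linear_compose_scale_right[OF vec.linear_ident]])

lemma scale_back:
  fixes x :: "'a::field^'n"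
  assumes S: "vec.subspace S" and "c \<noteq> 0" and "c *s x \<in> S"
  shows "x \<in> S"
proof -
  have "(1/c) *s (c *s x) \<in> S" using assms vec.subspace_scale by blast
  then show ?thesis using assms(2) by (simp add: vector_smult_assoc)
qed

context
  fixes f :: "complex^'n \<Rightarrow> complex^'n" and Q :: "(complex^'n) set"
  assumes lin: "Vector_Spaces.linear (*s) (*s) f" and Q: "vec.subspace Q" and fQ: "f ` Q \<subseteq> Q"
begin

context
  fixes S :: "(complex^'n) set"
  assumes S: "vec.subspace S" and SQ: "S \<subseteq> Q" and fS: "f ` S \<subseteq> S"
begin

lemma Eig_sub: "vec.subspace (Eig f Q S \<nu>)"
proof -
  have l: "Vector_Spaces.linear (*s) (*s) (\<lambda>x. f x - \<nu> *s x)" by (rule lin_shift[OF lin])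
  have "Eig f Q S \<nu> = Q \<inter> ((\<lambda>x. f x - \<nu> *s x) -` S)" by (auto simp: Eig_def)
  then show ?thesis using vec.subspace_inter[OF Q vec.linear_subspace_vimage[OF l S]] by simp
qed

lemma Eig_Q: "Eig f Q S \<nu> \<subseteq> Q" by (auto simp: Eig_def)

lemma S_Eig: "S \<subseteq> Eig f Q S \<nu>"
  using SQ fS S by (auto simp: Eig_def vec.subspace_diff vec.subspace_scale)

lemma f_Eig: "f ` Eig f Q S \<nu> \<subseteq> Eig f Q S \<nu>"
proof
  fix y assume "y \<in> f ` Eig f Q S \<nu>"
  then obtain x where x: "x \<in> Q" "f x - \<nu> *s x \<in> S" "y = f x" by (auto simp: Eig_def)
  have "f (f x - \<nu> *s x) \<in> S" using x fS by auto
  then have "f y - \<nu> *s y \<in> S" using x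
    by (simp add: vec.linear_diff[OF lin] vec.linear_scale[OF lin])
  then show "y \<in> Eig f Q S \<nu>" using x fQ by (auto simp: Eig_def)
qed

lemma Rg_sub: "vec.subspace (Rg f Q S \<nu>)"
  unfolding Rg_def
  by (rule vec.subspace_sums[OF vec.linear_subspace_image[OF lin_shift[OF lin] Q] S])

lemma S_Rg: "S \<subseteq> Rg f Q S \<nu>"
proof
  fix s assume s: "s \<in> S"
  have "f 0 - \<nu> *s 0 = 0" using vec.linear_0[OF lin] by simp
  then have "s = (f 0 - \<nu> *s 0) + s" by simp
  then show "s \<in> Rg f Q S \<nu>" unfolding Rg_def using vec.subspace_0[OF Q] s by blast
qed

lemma dimform: "vec.dim (Eig f Q S \<nu>) + vec.dim (Rg f Q S \<nu>) = vec.dim Q + vec.dim S"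
  unfolding Eig_def Rg_def by (rule rel_rank_nullity[OF lin_shift[OF lin] Q S])

lemma F1:
  assumes "\<mu> \<noteq> \<nu>"
  shows "Eig f Q S \<mu> \<subseteq> Rg f Q S \<nu>"
proof
  fix x assume x: "x \<in> Eig f Q S \<mu>"
  then have xQ: "x \<in> Q" and xs: "f x - \<mu> *s x \<in> S" by (auto simp: Eig_def)
  define c where "c = 1/(\<mu> - \<nu>)"
  have c: "c * (\<mu> - \<nu>) = 1" using assms by (simp add: c_def)
  have "x = (f (c *s x) - \<nu> *s (c *s x)) + (- (c *s (f x - \<mu> *s x)))"
  proof -
    have "(f (c *s x) - \<nu> *s (c *s x)) + (- (c *s (f x - \<mu> *s x))) = (c * (\<mu> - \<nu>)) *s x"
      by (simp add: vec.linear_scale[OF lin] vec_eq_iff algebra_simps)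
    then show ?thesis using c by simp
  qed
  also have "\<dots> \<in> Rg f Q S \<nu>"
  proof -
    have "c *s x \<in> Q" using xQ vec.subspace_scale[OF Q] by blast
    moreover have "- (c *s (f x - \<mu> *s x)) \<in> S"
      using xs vec.subspace_scale[OF S] vec.subspace_neg[OF S] by blast
    ultimately show ?thesis unfolding Rg_def by blast
  qed
  finally show "x \<in> Rg f Q S \<nu>" .
qed

lemma F2:
  assumes "\<mu> \<noteq> \<nu>"
  shows "Eig f Q S \<mu> \<inter> Eig f Q S \<nu> \<subseteq> S"
proof
  fix x assume "x \<in> Eig f Q S \<mu> \<inter> Eig f Q S \<nu>"
  then have a: "f x - \<mu> *s x \<in> S" and b: "f x - \<nu> *s x \<in> S" by (auto simp: Eig_def)
  have d: "(f x - \<nu> *s x) - (f x - \<mu> *s x) \<in> S" using a b vec.subspace_diff[OF S] by blast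
  have e: "(f x - \<nu> *s x) - (f x - \<mu> *s x) = (\<mu> - \<nu>) *s x"
    by (simp add: vec_eq_iff algebra_simps)
  have "(\<mu> - \<nu>) *s x \<in> S" using d unfolding e .
  then show "x \<in> S" by (rule scale_back[OF S, rotated]) (use assms in simp)
qed


lemma span_S: "vec.span S = S" using S vec.span_eq_iff by blast

lemma spanS_sub: "vec.span S \<subseteq> S" by (rule vec.span_minimal[OF order_refl S])

lemma in_span_insert:
  assumes "v \<in> vec.span (insert w S)"
  shows "\<exists>k. v - k *s w \<in> S"
proof -
  obtain k where "v - k *s w \<in> vec.span S" using assms vec.span_insert[of w S] by blast
  then show ?thesis using spanS_sub by blast
qed

lemma chain_ok:
  assumes x2: "x2 \<in> Q" "x2 \<notin> Eig f Q S \<mu>" and y: "f x2 - \<mu> *s x2 \<in> Eig f Q S \<mu>"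
  shows "good f S x2"
proof -
  define y where "y = f x2 - \<mu> *s x2"
  have yE: "y \<in> Eig f Q S \<mu>" using y y_def by simp
  have ES: "vec.subspace (Eig f Q S \<mu>)" by (rule Eig_sub)
  have i: "x2 \<notin> vec.span S" using x2 S_Eig spanS_sub by blast
  have ii: "f x2 \<notin> vec.span (insert x2 S)"
  proof
    assume "f x2 \<in> vec.span (insert x2 S)"
    then obtain k where k: "f x2 - k *s x2 \<in> S" using in_span_insert by blast
    show False
    proof (cases "k = \<mu>")
      case True
      then have "x2 \<in> Eig f Q S \<mu>" using k x2(1) by (simp add: Eig_def)
      then show False using x2 by simp
    next
      case False
      have "f x2 - k *s x2 \<in> Eig f Q S \<mu>" using k S_Eig by blast
      then have "y - (f x2 - k *s x2) \<in> Eig f Q S \<mu>" using yE vec.subspace_diff[OF ES] by blast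
      moreover have "y - (f x2 - k *s x2) = (k - \<mu>) *s x2" unfolding y_def
        by (simp add: vec_eq_iff algebra_simps)
      ultimately have "(k - \<mu>) *s x2 \<in> Eig f Q S \<mu>" by simp
      then have "x2 \<in> Eig f Q S \<mu>" by (rule scale_back[OF ES, rotated]) (use False in simp)
      then show False using x2 by simp
    qed
  qed
  have iii: "f (f x2) \<in> vec.span (insert x2 (insert (f x2) S))"
  proof -
    let ?T = "vec.span (insert x2 (insert (f x2) S))"
    define s' where "s' = f y - \<mu> *s y"
    have s': "s' \<in> S" using yE s'_def by (simp add: Eig_def)
    have fy: "f y = f (f x2) - \<mu> *s f x2" unfolding y_def
      by (simp add: vec.linear_diff[OF lin] vec.linear_scale[OF lin])
    have eq: "f (f x2) = s' + \<mu> *s f x2 + \<mu> *s (f x2 - \<mu> *s x2)"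
      unfolding s'_def fy by (simp add: y_def vec_eq_iff algebra_simps)
    have sup: "insert x2 (insert (f x2) S) \<subseteq> ?T" by (rule vec.span_superset)
    have "s' \<in> ?T" using s' sup by auto
    moreover have "f x2 \<in> ?T" "x2 \<in> ?T" using sup by auto
    ultimately have "s' + \<mu> *s f x2 + \<mu> *s (f x2 - \<mu> *s x2) \<in> ?T"
      by (intro vec.span_add vec.span_scale vec.span_diff) auto
    then show ?thesis using eq by simp
  qed
  show ?thesis using i ii iii by (simp add: good_def)
qed

lemma two_ok:
  assumes x1: "x1 \<in> Eig f Q S \<mu>" "x1 \<notin> S" and x2: "x2 \<in> Eig f Q S \<nu>" "x2 \<notin> Eig f Q S \<mu>"
    and mn: "\<mu> \<noteq> \<nu>"
  shows "good f S (x1 + x2) \<and> x1 \<in> vec.span (insert (x1 + x2) (insert (f (x1 + x2)) S))"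
proof -
  define w where "w = x1 + x2"
  let ?T = "vec.span (insert w (insert (f w) S))"
  have ES: "vec.subspace (Eig f Q S \<mu>)" by (rule Eig_sub)
  define s1 where "s1 = f x1 - \<mu> *s x1"
  define s2 where "s2 = f x2 - \<nu> *s x2"
  have s1: "s1 \<in> S" using x1 s1_def by (simp add: Eig_def)
  have s2: "s2 \<in> S" using x2 s2_def by (simp add: Eig_def)
  have fw: "f w = \<mu> *s x1 + \<nu> *s x2 + (s1 + s2)"
  proof -
    have e: "f w = f x1 + f x2" unfolding w_def by (rule vec.linear_add[OF lin])
    show ?thesis unfolding s1_def s2_def e by (simp add: algebra_simps)
  qed
  have i: "w \<notin> vec.span S"
  proof
    assume "w \<in> vec.span S"
    then have "w \<in> Eig f Q S \<mu>" using S_Eig spanS_sub by blast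
    then have "w - x1 \<in> Eig f Q S \<mu>" using x1 vec.subspace_diff[OF ES] by blast
    then show False using x2 by (simp add: w_def)
  qed
  have ii: "f w \<notin> vec.span (insert w S)"
  proof
    assume "f w \<in> vec.span (insert w S)"
    then obtain k where k: "f w - k *s w \<in> S" using in_span_insert by blast
    have "f w - k *s w - (s1 + s2) \<in> S" using k s1 s2 vec.subspace_diff[OF S] vec.subspace_add[OF S] by blast
    moreover have "f w - k *s w - (s1 + s2) = (\<mu> - k) *s x1 + (\<nu> - k) *s x2"
      unfolding fw by (simp add: w_def vec_eq_iff algebra_simps)
    ultimately have t: "(\<mu> - k) *s x1 + (\<nu> - k) *s x2 \<in> S" by simp
    show False
    proof (cases "k = \<nu>")
      case True
      then have "(\<mu> - \<nu>) *s x1 \<in> S" using t by simp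
      then have "x1 \<in> S" by (rule scale_back[OF S, rotated]) (use mn in simp)
      then show False using x1 by simp
    next
      case False
      have "(\<mu> - k) *s x1 + (\<nu> - k) *s x2 \<in> Eig f Q S \<mu>" using t S_Eig by blast
      moreover have "(\<mu> - k) *s x1 \<in> Eig f Q S \<mu>" using x1 vec.subspace_scale[OF ES] by blast
      ultimately have "((\<mu> - k) *s x1 + (\<nu> - k) *s x2) - (\<mu> - k) *s x1 \<in> Eig f Q S \<mu>"
        using vec.subspace_diff[OF ES] by blast
      then have "(\<nu> - k) *s x2 \<in> Eig f Q S \<mu>" by simp
      then have "x2 \<in> Eig f Q S \<mu>" by (rule scale_back[OF ES, rotated]) (use False in simp)
      then show False using x2 by simp
    qed
  qed
  have sup: "insert w (insert (f w) S) \<subseteq> ?T" by (rule vec.span_superset)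
  have wT: "w \<in> ?T" and fwT: "f w \<in> ?T" and ST: "S \<subseteq> ?T" using sup by auto
  have x1T: "x1 \<in> ?T"
  proof -
    have "(f w - \<nu> *s w) - (s1 + s2) \<in> ?T"
      using wT fwT ST s1 s2 by (intro vec.span_diff vec.span_add vec.span_scale) auto
    moreover have "(f w - \<nu> *s w) - (s1 + s2) = (\<mu> - \<nu>) *s x1"
      unfolding fw by (simp add: w_def vec_eq_iff algebra_simps)
    ultimately have "(\<mu> - \<nu>) *s x1 \<in> ?T" by simp
    then show ?thesis by (rule scale_back[OF vec.subspace_span, rotated]) (use mn in simp)
  qed
  have x2T: "x2 \<in> ?T"
  proof -
    have "w - x1 \<in> ?T" using wT x1T vec.span_diff by blast
    then show ?thesis by (simp add: w_def)
  qed
  have iii: "f (f w) \<in> ?T"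
  proof -
    have fx1: "f x1 = \<mu> *s x1 + s1" and fx2: "f x2 = \<nu> *s x2 + s2" by (simp_all add: s1_def s2_def)
    have "\<mu> *s x1 + s1 \<in> ?T" using x1T ST s1 by (intro vec.span_add vec.span_scale) auto
    then have a1: "f x1 \<in> ?T" using fx1 by simp
    have "\<nu> *s x2 + s2 \<in> ?T" using x2T ST s2 by (intro vec.span_add vec.span_scale) auto
    then have a2: "f x2 \<in> ?T" using fx2 by simp
    have b1: "f s1 \<in> ?T" "f s2 \<in> ?T" using s1 s2 fS ST by auto
    have "f (f x1) = f (\<mu> *s x1 + s1)" using fx1 by simp
    also have "\<dots> = \<mu> *s f x1 + f s1" by (simp add: vec.linear_add[OF lin] vec.linear_scale[OF lin])
    finally have c1: "f (f x1) \<in> ?T" using a1 b1 by (simp add: vec.span_add vec.span_scale)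
    have "f (f x2) = f (\<nu> *s x2 + s2)" using fx2 by simp
    also have "\<dots> = \<nu> *s f x2 + f s2" by (simp add: vec.linear_add[OF lin] vec.linear_scale[OF lin])
    finally have c2: "f (f x2) \<in> ?T" using a2 b1 by (simp add: vec.span_add vec.span_scale)
    have "f (f w) = f (f x1) + f (f x2)" by (simp add: w_def vec.linear_add[OF lin])
    then show ?thesis using c1 c2 by (simp add: vec.span_add)
  qed
  show ?thesis using i ii iii x1T by (simp add: good_def w_def)
qed

lemma adjust:
  assumes x2: "x2 \<in> Q" "x2 \<notin> Eig f Q S \<mu>" and y: "f x2 - \<nu> *s x2 \<in> Eig f Q S \<mu>"
    and mn: "\<nu> \<noteq> \<mu>"
  shows "\<exists>x. x \<in> Eig f Q S \<nu> \<and> x \<notin> Eig f Q S \<mu>"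
proof -
  have ES: "vec.subspace (Eig f Q S \<mu>)" by (rule Eig_sub)
  define y where "y = f x2 - \<nu> *s x2"
  define t where "t = 1 / (\<nu> - \<mu>)"
  have yE: "y \<in> Eig f Q S \<mu>" using y y_def by simp
  then have yQ: "y \<in> Q" and s: "f y - \<mu> *s y \<in> S" by (auto simp: Eig_def)
  define x where "x = x2 + t *s y"
  have xQ: "x \<in> Q" unfolding x_def using x2 yQ vec.subspace_add[OF Q] vec.subspace_scale[OF Q] by blast
  have tt: "t * (\<nu> - \<mu>) = 1" using mn by (simp add: t_def)
  have fx: "f x = f x2 + t *s f y"
    unfolding x_def by (simp add: vec.linear_add[OF lin] vec.linear_scale[OF lin])
  have "f x - \<nu> *s x = (f x2 - \<nu> *s x2) + t *s (f y - \<nu> *s y)"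
    unfolding fx by (simp add: x_def vec_eq_iff algebra_simps)
  also have "\<dots> = y + t *s (f y - \<nu> *s y)" using y_def by simp
  also have "\<dots> = t *s (f y - \<mu> *s y) + (1 - t * (\<nu> - \<mu>)) *s y"
    by (simp add: vec_eq_iff algebra_simps)
  also have "\<dots> = t *s (f y - \<mu> *s y)" using tt by simp
  finally have eqx: "f x - \<nu> *s x = t *s (f y - \<mu> *s y)" .
  have "f x - \<nu> *s x \<in> S" unfolding eqx using s vec.subspace_scale[OF S] by blast
  then have "x \<in> Eig f Q S \<nu>" using xQ by (simp add: Eig_def)
  moreover have "x \<notin> Eig f Q S \<mu>"
  proof
    assume "x \<in> Eig f Q S \<mu>"
    then have "x - t *s y \<in> Eig f Q S \<mu>" using yE vec.subspace_diff[OF ES] vec.subspace_scale[OF ES] by blast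
    then show False using x2 by (simp add: x_def)
  qed
  ultimately show ?thesis by blast
qed


end

lemma exists_out:
  assumes "vec.subspace A" "vec.dim A < vec.dim B" 
  shows "\<exists>x. x \<in> B \<and> x \<notin> A"
proof (rule ccontr)
  assume "\<not> ?thesis"
  then have "B \<subseteq> A" by blast
  then have "vec.dim B \<le> vec.dim A" by (rule vec.dim_subset)
  then show False using assms by simp
qed

lemma step:
  assumes S: "vec.subspace S" and SQ: "S \<subseteq> Q" and fS: "f ` S \<subseteq> S"
    and k: "vec.dim Q = vec.dim S + 2 * k" "k \<ge> 1"
    and dimE: "\<forall>\<nu>. vec.dim (Eig f Q S \<nu>) \<le> vec.dim S + k"
    and w: "w \<in> Q" "good f S w"
    and crit: "\<forall>\<nu>. vec.dim (Eig f Q S \<nu>) = vec.dim S + k \<longrightarrow>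
                 (\<exists>x \<in> vec.span (insert w (insert (f w) S)). x \<notin> Rg f Q S \<nu>)"
  shows "vec.subspace (vec.span (insert w (insert (f w) S))) \<and>
         vec.span (insert w (insert (f w) S)) \<subseteq> Q \<and>
         f ` vec.span (insert w (insert (f w) S)) \<subseteq> vec.span (insert w (insert (f w) S)) \<and>
         vec.dim Q = vec.dim (vec.span (insert w (insert (f w) S))) + 2 * (k - 1) \<and>
         (\<forall>\<nu>. vec.dim (Eig f Q (vec.span (insert w (insert (f w) S))) \<nu>)
                \<le> vec.dim (vec.span (insert w (insert (f w) S))) + (k - 1))"
proof -
  define X where "X = insert w (insert (f w) S)"
  define S' where "S' = vec.span X"
  have S'sub: "vec.subspace S'" unfolding S'_def by simp
  have fwQ: "f w \<in> Q" using w fQ by auto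
  have XQ: "X \<subseteq> Q" unfolding X_def using w fwQ SQ by auto
  have S'Q: "S' \<subseteq> Q" unfolding S'_def by (rule vec.span_minimal[OF XQ Q])
  have sup: "X \<subseteq> S'" unfolding S'_def by (rule vec.span_superset)
  have SS': "S \<subseteq> S'" using sup X_def by auto
  have ffw: "f (f w) \<in> S'" using w(2) by (simp add: good_def S'_def X_def)
  have fX: "f ` X \<subseteq> S'"
  proof
    fix y assume "y \<in> f ` X"
    then obtain x where x: "x \<in> X" "y = f x" by auto
    then consider "x = w" | "x = f w" | "x \<in> S" unfolding X_def by auto
    then show "y \<in> S'"
    proof cases
      case 1 then show ?thesis using x sup X_def by auto
    next
      case 2 then show ?thesis using x ffw by auto
    next
      case 3 then show ?thesis using x fS SS' by auto
    qed
  qed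
  have fS': "f ` S' \<subseteq> S'"
  proof -
    have "f ` S' = vec.span (f ` X)" unfolding S'_def by (rule vec.linear_span_image[OF lin, symmetric])
    also have "\<dots> \<subseteq> S'" by (rule vec.span_minimal[OF fX S'sub])
    finally show ?thesis .
  qed
  have dimS': "vec.dim S' = vec.dim S + 2"
  proof -
    have n1: "w \<notin> vec.span S" and n2: "f w \<notin> vec.span (insert w S)" using w(2) by (auto simp: good_def)
    have "X = insert (f w) (insert w S)" unfolding X_def by auto
    then have "vec.dim X = vec.dim (insert w S) + 1" using n2 by (simp add: vec.dim_insert)
    also have "vec.dim (insert w S) = vec.dim S + 1" using n1 by (simp add: vec.dim_insert)
    finally show ?thesis unfolding S'_def by simp
  qed
  have dimE': "vec.dim (Eig f Q S' \<nu>) \<le> vec.dim S' + (k - 1)" for \<nu>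
  proof -
    have d1: "vec.dim (Eig f Q S \<nu>) + vec.dim (Rg f Q S \<nu>) = vec.dim Q + vec.dim S" by (rule dimform[OF S SQ fS])
    have d2: "vec.dim (Eig f Q S' \<nu>) + vec.dim (Rg f Q S' \<nu>) = vec.dim Q + vec.dim S'"
      by (rule dimform[OF S'sub S'Q fS'])
    have RR: "Rg f Q S \<nu> \<subseteq> Rg f Q S' \<nu>" unfolding Rg_def using SS' by blast
    have R1: "vec.subspace (Rg f Q S \<nu>)" by (rule Rg_sub[OF S SQ fS])
    have R2: "vec.subspace (Rg f Q S' \<nu>)" by (rule Rg_sub[OF S'sub S'Q fS'])
    have le: "vec.dim (Rg f Q S \<nu>) \<le> vec.dim (Rg f Q S' \<nu>)" by (rule vec.dim_subset[OF RR])
    show ?thesis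
    proof (cases "vec.dim (Eig f Q S \<nu>) = vec.dim S + k")
      case True
      then obtain x where x: "x \<in> S'" "x \<notin> Rg f Q S \<nu>" using crit S'_def X_def by blast
      have "x \<in> Rg f Q S' \<nu>" using x S_Rg[OF S'sub S'Q fS'] by blast
      then have "Rg f Q S \<nu> \<noteq> Rg f Q S' \<nu>" using x by blast
      then have "\<not> vec.dim (Rg f Q S' \<nu>) \<le> vec.dim (Rg f Q S \<nu>)"
        using vec.subspace_dim_equal[OF R1 R2 RR] by blast
      then show ?thesis using d1 d2 dimS' True k by linarith
    next
      case False
      have "vec.dim (Eig f Q S \<nu>) \<le> vec.dim S + k" using dimE by blast
      then have "vec.dim (Eig f Q S \<nu>) \<le> vec.dim S + k - 1" using False by linarith
      then show ?thesis using d1 d2 dimS' le k by linarith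
    qed
  qed
  show ?thesis using S'sub S'Q fS' dimS' dimE' k unfolding S'_def X_def by auto
qed



lemma key:
  assumes S: "vec.subspace S" and SQ: "S \<subseteq> Q" and fS: "f ` S \<subseteq> S"
    and k: "vec.dim Q = vec.dim S + 2 * k" "k \<ge> 1"
    and dimE: "\<forall>\<nu>. vec.dim (Eig f Q S \<nu>) \<le> vec.dim S + k"
  shows "\<exists>w. w \<in> Q \<and> good f S w \<and> (\<forall>\<nu>. vec.dim (Eig f Q S \<nu>) = vec.dim S + k \<longrightarrow>
                 (\<exists>x \<in> vec.span (insert w (insert (f w) S)). x \<notin> Rg f Q S \<nu>))"
proof -
  note ES = Eig_sub[OF S SQ fS] and EQ = Eig_Q[OF S SQ fS] and SE = S_Eig[OF S SQ fS]
    and RS = Rg_sub[OF S SQ fS] and SR = S_Rg[OF S SQ fS] and DF = dimform[OF S SQ fS]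
    and F1 = F1[OF S SQ fS] and F2 = F2[OF S SQ fS]
    and CH = chain_ok[OF S SQ fS] and TW = two_ok[OF S SQ fS] and AD = adjust[OF S SQ fS]
  have supT: "insert w (insert (f w) S) \<subseteq> vec.span (insert w (insert (f w) S))" for w
    by (rule vec.span_superset)
  have dimRg: "vec.dim (Rg f Q S la) = vec.dim S + k" if "vec.dim (Eig f Q S la) = vec.dim S + k" for la
    using DF[of la] that k by simp
  have ERg: "Eig f Q S \<mu> = Rg f Q S la"
    if "vec.dim (Eig f Q S la) = vec.dim S + k" "vec.dim (Eig f Q S \<mu>) = vec.dim S + k" "\<mu> \<noteq> la" for la \<mu>
    using vec.subspace_dim_equal[OF ES RS F1[OF that(3)]] dimRg[OF that(1)] that(2) by simp
  have outE: "\<exists>x. x \<in> Eig f Q S la \<and> x \<notin> S" if "vec.dim (Eig f Q S la) = vec.dim S + k" for la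
    using exists_out[OF S] that k by simp
  have outQ: "\<exists>x. x \<in> Q \<and> x \<notin> Eig f Q S la" for la
  proof -
    have "vec.dim (Eig f Q S la) \<le> vec.dim S + k" using dimE by blast
    then have "vec.dim (Eig f Q S la) < vec.dim Q" using k by linarith
    then show ?thesis using exists_out[OF ES] by blast
  qed
  show ?thesis
  proof (cases "\<exists>la. vec.dim (Eig f Q S la) = vec.dim S + k")
    case True
    then obtain la where cl: "vec.dim (Eig f Q S la) = vec.dim S + k" by blast
    show ?thesis
    proof (cases "\<exists>\<mu>. \<mu> \<noteq> la \<and> vec.dim (Eig f Q S \<mu>) = vec.dim S + k")
      case True
      then obtain \<mu> where lm: "\<mu> \<noteq> la" and cm: "vec.dim (Eig f Q S \<mu>) = vec.dim S + k" by blast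
      obtain x1 where x1: "x1 \<in> Eig f Q S la" "x1 \<notin> S" using outE[OF cl] by blast
      obtain x2 where x2: "x2 \<in> Eig f Q S \<mu>" "x2 \<notin> S" using outE[OF cm] by blast
      have x2n: "x2 \<notin> Eig f Q S la" using x2 F2[of la \<mu>] lm by blast
      have x1n: "x1 \<notin> Eig f Q S \<mu>" using x1 F2[of la \<mu>] lm by blast
      define w where "w = x1 + x2"
      have tw: "good f S w \<and> x1 \<in> vec.span (insert w (insert (f w) S))"
        unfolding w_def by (rule TW[OF x1 x2(1) x2n]) (use lm in auto)
      have x2T: "x2 \<in> vec.span (insert w (insert (f w) S))"
      proof -
        have "w - x1 \<in> vec.span (insert w (insert (f w) S))"
          using tw supT[of w] vec.span_diff by blast
        then show ?thesis by (simp add: w_def)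
      qed
      have wQ: "w \<in> Q" unfolding w_def using x1 x2 EQ vec.subspace_add[OF Q] by blast
      have "\<forall>\<nu>. vec.dim (Eig f Q S \<nu>) = vec.dim S + k \<longrightarrow>
                 (\<exists>x \<in> vec.span (insert w (insert (f w) S)). x \<notin> Rg f Q S \<nu>)"
      proof (intro allI impI)
        fix \<nu> assume cn: "vec.dim (Eig f Q S \<nu>) = vec.dim S + k"
        show "\<exists>x \<in> vec.span (insert w (insert (f w) S)). x \<notin> Rg f Q S \<nu>"
        proof (cases "\<nu> = la")
          case True
          have "x1 \<notin> Rg f Q S la" using ERg[OF cl cm lm] x1n by blast
          then show ?thesis using tw True by blast
        next
          case nl: False
          show ?thesis
          proof (cases "\<nu> = \<mu>")
            case True
            have "x2 \<notin> Rg f Q S \<mu>" using ERg[OF cm cl lm[symmetric]] x2n by blast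
            then show ?thesis using x2T True by blast
          next
            case nm: False
            define Sm where "Sm = {a + b |a b. a \<in> Eig f Q S la \<and> b \<in> Eig f Q S \<mu>}"
            have "Sm \<subseteq> Rg f Q S \<nu>"
            proof
              fix z assume "z \<in> Sm"
              then obtain a b where z: "z = a + b" "a \<in> Eig f Q S la" "b \<in> Eig f Q S \<mu>"
                unfolding Sm_def by blast
              have "a \<in> Rg f Q S \<nu>" using z F1[of la \<nu>] nl by blast
              moreover have "b \<in> Rg f Q S \<nu>" using z F1[of \<mu> \<nu>] nm by blast
              ultimately show "z \<in> Rg f Q S \<nu>" using z vec.subspace_add[OF RS] by blast
            qed
            then have le: "vec.dim Sm \<le> vec.dim (Rg f Q S \<nu>)" by (rule vec.dim_subset)
            have "vec.dim Sm + vec.dim (Eig f Q S la \<inter> Eig f Q S \<mu>) =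
                  vec.dim (Eig f Q S la) + vec.dim (Eig f Q S \<mu>)"
              unfolding Sm_def by (rule vec.dim_sums_Int[OF ES ES])
            moreover have "Eig f Q S la \<inter> Eig f Q S \<mu> = S" using F2[of la \<mu>] lm SE by blast
            ultimately have "vec.dim Sm = vec.dim S + 2 * k" using cl cm by simp
            then show ?thesis using le dimRg[OF cn] k by simp
          qed
        qed
      qed
      then show ?thesis using wQ tw by blast
    next
      case False
      then have only: "\<And>\<nu>. vec.dim (Eig f Q S \<nu>) = vec.dim S + k \<Longrightarrow> \<nu> = la" by blast
      define G where "G = Rg f Q S la"
      have EG: "\<not> Eig f Q S la \<subseteq> G" if "z \<in> G" "z \<notin> Eig f Q S la" for z
      proof
        assume "Eig f Q S la \<subseteq> G"
        then have "Eig f Q S la = G"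
          using vec.subspace_dim_equal[OF ES RS] dimRg[OF cl] cl G_def by simp
        then show False using that by blast
      qed
      obtain x0 where x0: "x0 \<in> Q" "x0 \<notin> Eig f Q S la" using outQ by blast
      obtain x2 \<nu> where x2: "x2 \<in> Q" "x2 \<notin> Eig f Q S la" "f x2 - \<nu> *s x2 \<in> Eig f Q S la"
        using eig_exists[OF lin Q fQ ES x0] by blast
      show ?thesis
      proof (cases "\<nu> = la")
        case True
        show ?thesis
        proof (cases "x2 \<in> G")
          case False
          have "good f S x2" using CH[OF x2(1,2)] x2(3) True by simp
          moreover have "\<forall>\<nu>'. vec.dim (Eig f Q S \<nu>') = vec.dim S + k \<longrightarrow>
                 (\<exists>x \<in> vec.span (insert x2 (insert (f x2) S)). x \<notin> Rg f Q S \<nu>')"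
            using only False supT[of x2] G_def by blast
          ultimately show ?thesis using x2 by blast
        next
          case x2G: True
          obtain x1 where x1: "x1 \<in> Eig f Q S la" "x1 \<notin> G" using EG[OF x2G x2(2)] by blast
          define w where "w = x2 + x1"
          have wQ: "w \<in> Q" unfolding w_def using x1 x2 EQ vec.subspace_add[OF Q] by blast
          have wn: "w \<notin> Eig f Q S la"
          proof
            assume "w \<in> Eig f Q S la"
            then have "w - x1 \<in> Eig f Q S la" using x1 vec.subspace_diff[OF ES] by blast
            then show False using x2 by (simp add: w_def)
          qed
          have fw: "f w = f x2 + f x1" unfolding w_def by (rule vec.linear_add[OF lin])
          have weq: "f w - la *s w = (f x2 - la *s x2) + (f x1 - la *s x1)"
            unfolding fw by (simp add: w_def vec_eq_iff algebra_simps)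
          have "f x1 - la *s x1 \<in> S" using x1 by (simp add: Eig_def)
          then have "f x1 - la *s x1 \<in> Eig f Q S la" using SE by blast
          then have "f w - la *s w \<in> Eig f Q S la"
            unfolding weq using x2(3) True vec.subspace_add[OF ES] by blast
          then have gw: "good f S w" using CH[OF wQ wn] by simp
          have wG: "w \<notin> G"
          proof
            assume "w \<in> G"
            then have "w - x2 \<in> G" using x2G vec.subspace_diff[OF RS] G_def by blast
            then show False using x1 by (simp add: w_def)
          qed
          have "\<forall>\<nu>'. vec.dim (Eig f Q S \<nu>') = vec.dim S + k \<longrightarrow>
                 (\<exists>x \<in> vec.span (insert w (insert (f w) S)). x \<notin> Rg f Q S \<nu>')"
            using only wG supT[of w] G_def by blast
          then show ?thesis using wQ gw by blast
        qed
      next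
        case False
        obtain x3 where x3: "x3 \<in> Eig f Q S \<nu>" "x3 \<notin> Eig f Q S la"
          using AD[OF x2(1,2,3) False] by blast
        have x3G: "x3 \<in> G" using x3 F1[OF False] G_def by blast
        obtain x1 where x1: "x1 \<in> Eig f Q S la" "x1 \<notin> G" using EG[OF x3G x3(2)] by blast
        have x1S: "x1 \<notin> S" using x1 SR G_def by blast
        define w where "w = x1 + x3"
        have tw: "good f S w \<and> x1 \<in> vec.span (insert w (insert (f w) S))"
          unfolding w_def by (rule TW[OF x1(1) x1S x3]) (use False in auto)
        have wQ: "w \<in> Q" unfolding w_def using x1 x3 EQ vec.subspace_add[OF Q] by blast
        have "\<forall>\<nu>'. vec.dim (Eig f Q S \<nu>') = vec.dim S + k \<longrightarrow>
                 (\<exists>x \<in> vec.span (insert w (insert (f w) S)). x \<notin> Rg f Q S \<nu>')"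
          using only tw x1 G_def by blast
        then show ?thesis using wQ tw by blast
      qed
    qed
  next
    case False
    then have nocrit: "\<forall>\<nu>. vec.dim (Eig f Q S \<nu>) = vec.dim S + k \<longrightarrow>
                 (\<exists>x \<in> vec.span (insert w (insert (f w) S)). x \<notin> Rg f Q S \<nu>)" for w by blast
    obtain x0 where x0: "x0 \<in> Q" "x0 \<notin> S" using exists_out[OF S, of Q] k by auto
    obtain x1 \<mu> where x1: "x1 \<in> Q" "x1 \<notin> S" "f x1 - \<mu> *s x1 \<in> S"
      using eig_exists[OF lin Q fQ S x0] by blast
    have x1E: "x1 \<in> Eig f Q S \<mu>" using x1 by (simp add: Eig_def)
    obtain x0' where x0': "x0' \<in> Q" "x0' \<notin> Eig f Q S \<mu>" using outQ by blast
    obtain x2 \<nu> where x2: "x2 \<in> Q" "x2 \<notin> Eig f Q S \<mu>" "f x2 - \<nu> *s x2 \<in> Eig f Q S \<mu>"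
      using eig_exists[OF lin Q fQ ES x0'] by blast
    show ?thesis
    proof (cases "\<nu> = \<mu>")
      case True
      have "good f S x2" using CH[OF x2(1,2)] x2(3) True by simp
      then show ?thesis using x2 nocrit by blast
    next
      case False
      obtain x3 where x3: "x3 \<in> Eig f Q S \<nu>" "x3 \<notin> Eig f Q S \<mu>"
        using AD[OF x2(1,2,3) False] by blast
      have "good f S (x1 + x3)" using TW[OF x1E x1(2) x3] False by auto
      moreover have "x1 + x3 \<in> Q" using x1 x3 EQ vec.subspace_add[OF Q] by blast
      ultimately show ?thesis using nocrit by blast
    qed
  qed
qed


lemma main:
  "vec.subspace S \<Longrightarrow> S \<subseteq> Q \<Longrightarrow> f ` S \<subseteq> S \<Longrightarrow> vec.dim Q = vec.dim S + 2 * k \<Longrightarrow>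
   (\<forall>\<nu>. vec.dim (Eig f Q S \<nu>) \<le> vec.dim S + k) \<Longrightarrow>
   \<exists>W. finite W \<and> W \<subseteq> Q \<and> card W \<le> k \<and> Q \<subseteq> vec.span (S \<union> W \<union> f ` W)"
proof (induction k arbitrary: S)
  case 0
  then have "S = Q" using vec.subspace_dim_equal[OF 0(1) Q 0(2)] by simp
  then show ?case using vec.span_superset[of Q] by (intro exI[of _ "{}"]) auto
next
  case (Suc k)
  obtain w where w: "w \<in> Q" "good f S w"
    and crit: "\<forall>\<nu>. vec.dim (Eig f Q S \<nu>) = vec.dim S + Suc k \<longrightarrow>
                 (\<exists>x \<in> vec.span (insert w (insert (f w) S)). x \<notin> Rg f Q S \<nu>)"
    using key[OF Suc.prems(1,2,3,4) _ Suc.prems(5)] by auto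
  define S' where "S' = vec.span (insert w (insert (f w) S))"
  have st: "vec.subspace S' \<and> S' \<subseteq> Q \<and> f ` S' \<subseteq> S' \<and> vec.dim Q = vec.dim S' + 2 * (Suc k - 1) \<and>
         (\<forall>\<nu>. vec.dim (Eig f Q S' \<nu>) \<le> vec.dim S' + (Suc k - 1))"
    unfolding S'_def using step[OF Suc.prems(1,2,3,4) _ Suc.prems(5) w crit] by simp
  then obtain W' where W': "finite W'" "W' \<subseteq> Q" "card W' \<le> k" "Q \<subseteq> vec.span (S' \<union> W' \<union> f ` W')"
    using Suc.IH[of S'] by auto
  define W where "W = insert w W'"
  have "finite W" "W \<subseteq> Q" using W' w by (auto simp: W_def)
  moreover have "card W \<le> Suc k" using W' by (simp add: W_def card_insert_if)
  moreover have "Q \<subseteq> vec.span (S \<union> W \<union> f ` W)"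
  proof -
    have a: "insert w (insert (f w) S) \<subseteq> S \<union> W \<union> f ` W" by (auto simp: W_def)
    have "S' \<subseteq> vec.span (S \<union> W \<union> f ` W)" unfolding S'_def using a by (rule vec.span_mono)
    moreover have "W' \<union> f ` W' \<subseteq> vec.span (S \<union> W \<union> f ` W)"
      using vec.span_superset[of "S \<union> W \<union> f ` W"] by (auto simp: W_def)
    ultimately have "S' \<union> W' \<union> f ` W' \<subseteq> vec.span (S \<union> W \<union> f ` W)" by blast
    then have "vec.span (S' \<union> W' \<union> f ` W') \<subseteq> vec.span (S \<union> W \<union> f ` W)"
      using vec.span_minimal vec.subspace_span by blast
    then show ?thesis using W'(4) by blast
  qed
  ultimately show ?case by blast
qed

end

lemma mat_mult_scal: "mat c *v x = c *s (x :: 'a::field^'n)"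
proof (rule vec_eq_iff[THEN iffD2], rule allI)
  fix i
  have "(mat c *v x) $ i = (\<Sum>j\<in>UNIV. mat c $ i $ j * x $ j)" by (simp add: matrix_vector_mult_def)
  also have "\<dots> = (\<Sum>j\<in>UNIV. if i = j then c * x $ j else 0)" by (rule sum.cong) (auto simp: mat_def)
  also have "\<dots> = c * x $ i" by simp
  finally show "(mat c *v x) $ i = (c *s x) $ i" by simp
qed

theorem lemma5p4:
  fixes n :: nat and A :: "complex ^ 'm ^ 'm"
  assumes "n \<ge> 1"
    and "CARD('m) = 2 * n + 2"
    and "invertible A"
    and "\<forall>\<alpha>::complex. rank (A - mat \<alpha>) \<ge> n + 1"
  shows "\<exists>W :: (complex ^ 'm) set. vec.subspace W \<and> vec.dim W = n + 1 \<and>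
           ((\<lambda>x. A *v x) ` W) \<inter> W = {0}"
proof -
  define f where "f = (\<lambda>x. A *v x)"
  have lin: "Vector_Spaces.linear (*s) (*s) f" unfolding f_def by (rule matrix_vector_mul_linear_gen)
  have Q: "vec.subspace (UNIV :: (complex^'m) set)" by (rule vec.subspace_UNIV)
  have fQ: "f ` UNIV \<subseteq> UNIV" by simp
  have S0: "vec.subspace {0::complex^'m}" by (rule vec.subspace_single_0)
  have fS0: "f ` {0} \<subseteq> {0}" by (simp add: f_def)
  have d0: "vec.dim {0::complex^'m} = 0" by simp
  have dU: "vec.dim (UNIV :: (complex^'m) set) = vec.dim {0::complex^'m} + 2 * (n + 1)"
  proof -
    have "vec.dim (UNIV :: (complex^'m) set) = CARD('m)" by (rule vec_dim_card)
    then show ?thesis using assms(2) d0 by simp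
  qed
  have dE: "\<forall>\<nu>. vec.dim (Eig f UNIV {0} \<nu>) \<le> vec.dim {0::complex^'m} + (n + 1)"
  proof
    fix \<nu> :: complex
    have e: "Eig f UNIV {0} \<nu> = {x. (A - mat \<nu>) *v x = 0}"
      by (auto simp: Eig_def f_def matrix_vector_mult_diff_rdistrib mat_mult_scal)
    have k: "vec.dim {x. (A - mat \<nu>) *v x = 0} + rank (A - mat \<nu>) \<le> CARD('m)"
      by (rule kernel_rank)
    have r: "rank (A - mat \<nu>) \<ge> n + 1" using assms(4) by blast
    show "vec.dim (Eig f UNIV {0} \<nu>) \<le> vec.dim {0::complex^'m} + (n + 1)"
      unfolding e d0 using k r assms(2) by linarith
  qed
  obtain W where W: "finite W" "card W \<le> n + 1" "UNIV \<subseteq> vec.span ({0} \<union> W \<union> f ` W)"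
    using main[OF lin Q fQ S0 _ fS0 dU dE] by auto
  define Ws where "Ws = vec.span W"
  have Wsub: "vec.subspace Ws" unfolding Ws_def by simp
  have fWs: "f ` Ws = vec.span (f ` W)" unfolding Ws_def by (rule vec.linear_span_image[OF lin, symmetric])
  have fWsub: "vec.subspace (f ` Ws)" unfolding fWs by simp
  have dWs: "vec.dim Ws \<le> n + 1"
    using vec.dim_le_card[of Ws W] W(1,2) unfolding Ws_def by simp
  have dfWs: "vec.dim (f ` Ws) \<le> vec.dim Ws" by (rule vec.dim_image_le[OF lin])
  have "vec.span ({0} \<union> W \<union> f ` W) = vec.span (W \<union> f ` W)" by simp
  also have "\<dots> = {x + y |x y. x \<in> vec.span W \<and> y \<in> vec.span (f ` W)}" by (rule vec.span_Un)
  also have "\<dots> = {x + y |x y. x \<in> Ws \<and> y \<in> f ` Ws}" by (simp add: Ws_def vec.linear_span_image[OF lin])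
  finally have sums: "{x + y |x y. x \<in> Ws \<and> y \<in> f ` Ws} = UNIV" using W(3) by auto
  have "vec.dim {x + y |x y. x \<in> Ws \<and> y \<in> f ` Ws} + vec.dim (Ws \<inter> f ` Ws) = vec.dim Ws + vec.dim (f ` Ws)"
    by (rule vec.dim_sums_Int[OF Wsub fWsub])
  then have "vec.dim (UNIV :: (complex^'m) set) + vec.dim (Ws \<inter> f ` Ws) = vec.dim Ws + vec.dim (f ` Ws)"
    unfolding sums .
  then have eq: "2 * (n + 1) + vec.dim (Ws \<inter> f ` Ws) = vec.dim Ws + vec.dim (f ` Ws)"
    using dU d0 by simp
  have ar: "\<And>a b c::nat. 2 * (n + 1) + a = b + c \<Longrightarrow> b \<le> n + 1 \<Longrightarrow> c \<le> b \<Longrightarrow> a = 0 \<and> b = n + 1"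
    by arith
  have dint: "vec.dim (Ws \<inter> f ` Ws) = 0" and dW: "vec.dim Ws = n + 1"
    using ar[OF eq dWs dfWs] by auto
  have "Ws \<inter> f ` Ws \<subseteq> {0}" using dint by simp
  moreover have "0 \<in> Ws" "0 \<in> f ` Ws" using vec.subspace_0[OF Wsub] vec.subspace_0[OF fWsub] by auto
  ultimately have "f ` Ws \<inter> Ws = {0}" by blast
  then show ?thesis using Wsub dW unfolding f_def by blast
qed

end
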